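(* Fix $\omega\in\{0,\infty\}$ and a network (finite directed multigraph with edge set $\mathcal E$, OD pairs $\mathcal I$, pairwise disjoint nonempty finite path sets $\mathcal P^i$) with nondecreasing edge functions $g_e:[0,\infty)\to[0,\infty)$, $g_e(0)=0$. Let $g:(0,\infty)\to(0,\infty)$ be $\rho$-regularly varying at $\omega$ with $\rho>0$ (i.e. $\lim_{t\to\omega}g(tx)/g(t)=x^\rho$ for all $x>0$) and such that $\alpha_e=\lim_{x\to\omega}g_e(x)/g(x)\in[0,\infty]$ exists for all $e$. Let $\alpha_p=\max_{e\in p}\alpha_e$ and $\alpha^i=\min_{p\in\mathcal P^i}\alpha_p$. Let $m_n=M_n\lambda_n$ be inflow vectors with $M_n>0$, $\lambda_n\in\Delta(\mathcal I)$, such that: (a) $M_n\to\omega$ and $\lambda_n\to\lambda\in\Delta(\mathcal I)$; (b) every OD pair has a path $p$ with $\alpha_p<\infty$; (c) there is $i\in\mathcal I$ with $0<\alpha^i<\infty$ and $\lambda^i>0$. Let $G_n=\min_{y\in\mathcal Y}\sum_{e\in\mathcal E}g_e(x_e(y,m_n))$. Then $\lim_{n\to\infty}G_n/g(M_n)=V_\rho(\lambda)$, where $V_\rho(\lambda)=\min_{y\in\mathcal Y}\sum_{e\in\mathcal E}\alpha_e\,\zeta_e(y,\lambda)^\rho\in(0,\infty)$ with the convention $\alpha_e\zeta_e^\rho=0$ when $\alpha_e=\infty$ and $\zeta_e=0$. Moreover, if $\bar y_n$ is a sequence of optimal solutions for $G_n$, every limit point of $(\bar y_n)$ is optimal fo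r $V_\rho(\lambda)$.
   Context: $\Delta(\mathcal I)$ is the probability simplex on $\mathcal I$. A normalized traffic allocation is $y=(y^i)_{i\in\mathcal I}$ with $y^i\in\Delta(\mathcal P^i)$ (nonnegative, summing to $1$); $\mathcal Y=\prod_i\Delta(\mathcal P^i)$. For $e\in\mathcal E$, $z_e^i(y)=\sum_{p\in\mathcal P^i,\,p\ni e}y^i_p$, $\zeta_e(y,\lambda)=\sum_i\lambda^iz_e^i(y)$, and for an inflow vector $m=M\lambda$, $x_e(y,m)=M\zeta_e(y,\lambda)=\sum_i m^iz^i_e(y)$. *)

theory Defs
  imports "HOL-Analysis.Analysis"
begin

definition is_path :: "('e \<Rightarrow> 'v) \<Rightarrow> ('e \<Rightarrow> 'v) \<Rightarrow> 'v \<Rightarrow> 'v \<Rightarrow> 'e list \<Rightarrow> bool" where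
  "is_path tail head u w p \<longleftrightarrow>
     p \<noteq> [] \<and> tail (hd p) = u \<and> head (last p) = w \<and>
     (\<forall>k. Suc k < length p \<longrightarrow> head (p ! k) = tail (p ! Suc k)) \<and>
     distinct (map tail p @ [head (last p)])"

definition prob_simplex :: "'a set \<Rightarrow> ('a \<Rightarrow> real) set" where
  "prob_simplex A = {v. (\<forall>a\<in>A. 0 \<le> v a) \<and> (\<forall>a. a \<notin> A \<longrightarrow> v a = 0) \<and> sum v A = 1}"

definition allocs :: "('i \<Rightarrow> 'p set) \<Rightarrow> ('i \<Rightarrow> 'p \<Rightarrow> real) set" where
  "allocs P = {y. \<forall>i. y i \<in> prob_simplex (P i)}"

definition zflow :: "('i \<Rightarrow> 'e list set) \<Rightarrow> ('i \<Rightarrow> 'e list \<Rightarrow> real) \<Rightarrow> 'e \<Rightarrow> 'i \<Rightarrow> real" where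
  "zflow P y e i = (\<Sum>p\<in>{p\<in>P i. e \<in> set p}. y i p)"

definition zeta :: "('i::finite \<Rightarrow> 'e list set) \<Rightarrow> ('i \<Rightarrow> 'e list \<Rightarrow> real) \<Rightarrow> ('i \<Rightarrow> real) \<Rightarrow> 'e \<Rightarrow> real" where
  "zeta P y lam e = (\<Sum>i\<in>UNIV. lam i * zflow P y e i)"

definition xflow :: "('i::finite \<Rightarrow> 'e list set) \<Rightarrow> ('i \<Rightarrow> 'e list \<Rightarrow> real) \<Rightarrow> ('i \<Rightarrow> real) \<Rightarrow> 'e \<Rightarrow> real" where
  "xflow P y m e = (\<Sum>i\<in>UNIV. m i * zflow P y e i)"

definition cost :: "('i::finite \<Rightarrow> 'e list set) \<Rightarrow> ('e::finite \<Rightarrow> real \<Rightarrow> real) \<Rightarrow> ('i \<Rightarrow> real)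
    \<Rightarrow> ('i \<Rightarrow> 'e list \<Rightarrow> real) \<Rightarrow> real" where
  "cost P ge m y = (\<Sum>e\<in>UNIV. ge e (xflow P y m e))"

definition Gopt :: "('i::finite \<Rightarrow> 'e list set) \<Rightarrow> ('e::finite \<Rightarrow> real \<Rightarrow> real) \<Rightarrow> ('i \<Rightarrow> real) \<Rightarrow> real" where
  "Gopt P ge m = (INF y\<in>allocs P. cost P ge m y)"

text \<open>One term alpha_e * zeta_e^rho, with the convention that it is 0 whenever zeta_e = 0
  (in particular when alpha_e = \<infinity>).\<close>
definition limterm :: "ereal \<Rightarrow> real \<Rightarrow> real \<Rightarrow> ereal" where
  "limterm a z \<rho> = (if z = 0 then 0 else a * ereal (z powr \<rho>))"

definition Vobj :: "('i::finite \<Rightarrow> 'e list set) \<Rightarrow> ('e::finite \<Rightarrow> ereal) \<Rightarrow> real \<Rightarrow> ('i \<Rightarrow> real)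
    \<Rightarrow> ('i \<Rightarrow> 'e list \<Rightarrow> real) \<Rightarrow> ereal" where
  "Vobj P \<alpha> \<rho> lam y = (\<Sum>e\<in>UNIV. limterm (\<alpha> e) (zeta P y lam e) \<rho>)"

definition Vrho :: "('i::finite \<Rightarrow> 'e list set) \<Rightarrow> ('e::finite \<Rightarrow> ereal) \<Rightarrow> real \<Rightarrow> ('i \<Rightarrow> real) \<Rightarrow> ereal" where
  "Vrho P \<alpha> \<rho> lam = (INF y\<in>allocs P. Vobj P \<alpha> \<rho> lam y)"

definition omega_filter :: "ereal \<Rightarrow> real filter" where
  "omega_filter \<omega> = (if \<omega> = \<infinity> then at_top else at_right 0)"

definition alpha_path :: "('e \<Rightarrow> ereal) \<Rightarrow> 'e list \<Rightarrow> ereal" where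
  "alpha_path \<alpha> p = Max (\<alpha> ` set p)"

definition alpha_od :: "('i \<Rightarrow> 'e list set) \<Rightarrow> ('e \<Rightarrow> ereal) \<Rightarrow> 'i \<Rightarrow> ereal" where
  "alpha_od P \<alpha> i = Min (alpha_path \<alpha> ` P i)"

end

theory Submission
  imports Defs
begin

lemma ev_sum_lt:
  fixes t :: "'e \<Rightarrow> 'n \<Rightarrow> real" and l :: "'e \<Rightarrow> real"
  assumes fin: "finite A" and h: "\<And>e c. e \<in> A \<Longrightarrow> l e < c \<Longrightarrow> eventually (\<lambda>n. t e n < c) F"
    and B: "(\<Sum>e\<in>A. l e) < B"
  shows "eventually (\<lambda>n. (\<Sum>e\<in>A. t e n) < B) F"
proof (cases "A = {}")
  case True then show ?thesis using B by simp
next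
  case False
  define \<epsilon> where "\<epsilon> = (B - (\<Sum>e\<in>A. l e)) / card A"
  have cpos: "0 < card A" using fin False by (simp add: card_gt_0_iff)
  have epos: "0 < \<epsilon>" using B cpos by (simp add: \<epsilon>_def)
  have "eventually (\<lambda>n. \<forall>e\<in>A. t e n < l e + \<epsilon>) F"
    using fin h epos by (simp add: eventually_ball_finite)
  then show ?thesis
  proof (rule eventually_mono)
    fix n assume "\<forall>e\<in>A. t e n < l e + \<epsilon>"
    then have "(\<Sum>e\<in>A. t e n) < (\<Sum>e\<in>A. l e + \<epsilon>)"
      using fin False by (intro sum_strict_mono) auto
    also have "\<dots> = (\<Sum>e\<in>A. l e) + card A * \<epsilon>" by (simp add: sum.distrib)
    also have "\<dots> = B" using cpos by (simp add: \<epsilon>_def)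
    finally show "(\<Sum>e\<in>A. t e n) < B" .
  qed
qed

lemma ev_sum_gt:
  fixes t :: "'e \<Rightarrow> 'n \<Rightarrow> real" and l :: "'e \<Rightarrow> real"
  assumes fin: "finite A" and h: "\<And>e c. e \<in> A \<Longrightarrow> c < l e \<Longrightarrow> eventually (\<lambda>n. c < t e n) F"
    and B: "B < (\<Sum>e\<in>A. l e)"
  shows "eventually (\<lambda>n. B < (\<Sum>e\<in>A. t e n)) F"
proof -
  have "eventually (\<lambda>n. (\<Sum>e\<in>A. - t e n) < - B) F"
  proof (rule ev_sum_lt[OF fin, where l="\<lambda>e. - l e"])
    fix e c assume "e \<in> A" "- l e < c"
    then have "eventually (\<lambda>n. - c < t e n) F" using h[of e "- c"] by simp
    then show "eventually (\<lambda>n. - t e n < c) F" by (rule eventually_mono) simp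
  next
    show "(\<Sum>e\<in>A. - l e) < - B" using B by (simp add: sum_negf)
  qed
  then show ?thesis by (simp add: sum_negf)
qed

lemma extract_conv:
  fixes u :: "nat \<Rightarrow> 'a \<Rightarrow> real"
  assumes "finite S" and bnd: "\<forall>n x. \<bar>u n x\<bar> \<le> C"
  shows "\<exists>\<phi> l. strict_mono \<phi> \<and> (\<forall>x\<in>S. (\<lambda>k. u (\<phi> k) x) \<longlonglongrightarrow> l x)"
  using assms(1)
proof (induction S rule: finite_induct)
  case empty
  show ?case by (rule exI[of _ id]) (auto simp: strict_mono_def)
next
  case (insert x S)
  then obtain \<phi> l where phi: "strict_mono \<phi>" and conv: "\<forall>x\<in>S. (\<lambda>k. u (\<phi> k) x) \<longlonglongrightarrow> l x" by blast
  have "bounded (range (\<lambda>k. u (\<phi> k) x))"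
    using bnd by (intro boundedI[where B=C]) auto
  then obtain l0 \<psi> where psi: "strict_mono \<psi>" and c0: "((\<lambda>k. u (\<phi> k) x) \<circ> \<psi>) \<longlonglongrightarrow> l0"
    using bounded_imp_convergent_subsequence by blast
  show ?case
  proof (intro exI conjI ballI)
    show "strict_mono (\<phi> \<circ> \<psi>)" using phi psi by (rule strict_mono_o)
    fix x' assume "x' \<in> insert x S"
    then show "(\<lambda>k. u ((\<phi> \<circ> \<psi>) k) x') \<longlonglongrightarrow> (l(x := l0)) x'"
    proof
      assume "x' = x" then show ?thesis using c0 by (simp add: o_def)
    next
      assume "x' \<in> S"
      then have "((\<lambda>k. u (\<phi> k) x') \<circ> \<psi>) \<longlonglongrightarrow> l x'"
        using conv psi by (intro LIMSEQ_subseq_LIMSEQ) auto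
      then show ?thesis using \<open>x' \<in> S\<close> insert.hyps by (auto simp: o_def)
    qed
  qed
qed

lemma allocs_limit:
  assumes fin: "\<forall>i. finite (P i)" and u: "\<forall>k. u k \<in> allocs P"
    and conv: "\<forall>i p. (\<lambda>k. u k i p) \<longlonglongrightarrow> y i p"
  shows "y \<in> allocs P"
  unfolding allocs_def prob_simplex_def
proof (intro CollectI allI conjI ballI impI)
  fix i
  have ui: "\<And>k. u k i \<in> prob_simplex (P i)" using u by (auto simp: allocs_def)
  fix p
  { assume "p \<in> P i"
    then show "0 \<le> y i p" using ui conv
      by (intro LIMSEQ_le_const[of "\<lambda>k. u k i p"]) (auto simp: prob_simplex_def) }
  { assume "p \<notin> P i"
    then have "\<And>k. u k i p = 0" using ui by (auto simp: prob_simplex_def)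
    then show "y i p = 0" using conv[rule_format, of i p] by (simp add: LIMSEQ_const_iff) }
next
  fix i
  have ui: "\<And>k. u k i \<in> prob_simplex (P i)" using u by (auto simp: allocs_def)
  have "(\<lambda>k. \<Sum>p\<in>P i. u k i p) \<longlonglongrightarrow> (\<Sum>p\<in>P i. y i p)"
    using conv by (intro tendsto_sum) auto
  moreover have "\<And>k. (\<Sum>p\<in>P i. u k i p) = 1" using ui by (auto simp: prob_simplex_def)
  ultimately show "sum (y i) (P i) = 1" by (simp add: LIMSEQ_const_iff)
qed

lemma zeta_conv:
  assumes conv: "\<forall>i p. (\<lambda>k. u k i p) \<longlonglongrightarrow> y i p"
    and lconv: "\<forall>i. (\<lambda>k. lam k i) \<longlonglongrightarrow> l0 i"
  shows "(\<lambda>k. zeta P (u k) (lam k) e) \<longlonglongrightarrow> zeta P y l0 e"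
  unfolding zeta_def zflow_def using conv lconv
  by (intro tendsto_sum tendsto_mult) auto

lemma xflow_eq: "xflow P y (\<lambda>i. M * lam i) e = M * zeta P y lam e"
  unfolding xflow_def zeta_def by (simp add: sum_distrib_left mult.assoc)

lemma zflow_nonneg: "y \<in> allocs P \<Longrightarrow> 0 \<le> zflow P y e i"
  unfolding zflow_def allocs_def prob_simplex_def by (auto intro!: sum_nonneg)

lemma zeta_nonneg: "y \<in> allocs P \<Longrightarrow> \<forall>i. 0 \<le> lam i \<Longrightarrow> 0 \<le> zeta P y lam e"
  unfolding zeta_def using zflow_nonneg by (auto intro!: sum_nonneg mult_nonneg_nonneg)


lemma ereal_member_le_sum:
  fixes f :: "'a \<Rightarrow> ereal"
  assumes "finite A" "e \<in> A" "\<And>x. x \<in> A \<Longrightarrow> 0 \<le> f x"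
  shows "f e \<le> sum f A"
proof -
  have "0 \<le> sum f (A - {e})" using assms by (intro sum_nonneg) auto
  then have "f e \<le> f e + sum f (A - {e})" by (simp add: add_increasing2)
  also have "\<dots> = sum f A" using assms by (simp add: sum.remove)
  finally show ?thesis .
qed

lemma omega_scale:
  assumes om: "\<omega> = 0 \<or> \<omega> = \<infinity>" and Mlim: "filterlim M (omega_filter \<omega>) sequentially"
    and Mpos: "\<forall>n. 0 < M n" and c: "0 < (c::real)"
  shows "filterlim (\<lambda>n. M n * c) (omega_filter \<omega>) sequentially"
  using om
proof
  assume "\<omega> = \<infinity>"
  then have Mlim': "filterlim M at_top sequentially" using Mlim by (simp add: omega_filter_def)
  have "filterlim (\<lambda>n. c * M n) at_top sequentially"
    by (rule filterlim_tendsto_pos_mult_at_top[OF tendsto_const c Mlim'])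
  then show ?thesis using \<open>\<omega> = \<infinity>\<close> by (simp add: omega_filter_def mult.commute)
next
  assume "\<omega> = 0"
  then have Mlim': "filterlim M (at_right 0) sequentially" using Mlim by (simp add: omega_filter_def)
  then have "(M \<longlonglongrightarrow> 0)" by (simp add: filterlim_at)
  then have "(\<lambda>n. M n * c) \<longlonglongrightarrow> 0 * c" by (intro tendsto_mult tendsto_const)
  then have "filterlim (\<lambda>n. M n * c) (at_right 0) sequentially"
  proof -
    have "eventually (\<lambda>n. M n * c \<in> {0<..} \<and> M n * c \<noteq> 0) sequentially"
      using Mpos c by (intro always_eventually) (auto simp: less_imp_neq[symmetric])
    then show ?thesis using \<open>(\<lambda>n. M n * c) \<longlonglongrightarrow> 0 * c\<close> by (simp add: filterlim_at)
  qed
  then show ?thesis using \<open>\<omega> = 0\<close> by (simp add: omega_filter_def)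
qed

lemma L2:
  assumes om: "\<omega> = 0 \<or> \<omega> = \<infinity>" and Mlim: "filterlim M (omega_filter \<omega>) sequentially"
    and Mpos: "\<forall>n. 0 < M n" and gpos: "\<forall>x>0. 0 < g x"
    and rv: "((\<lambda>t. g (t * c) / g t) \<longlongrightarrow> c powr \<rho>) (omega_filter \<omega>)"
    and al: "((\<lambda>x. ereal (h x / g x)) \<longlongrightarrow> a) (omega_filter \<omega>)" and c: "0 < c"
  shows "((\<lambda>n. ereal (h (M n * c) / g (M n))) \<longlongrightarrow> a * ereal (c powr \<rho>)) sequentially"
proof -
  have MC: "filterlim (\<lambda>n. M n * c) (omega_filter \<omega>) sequentially"
    by (rule omega_scale[OF om Mlim Mpos c])
  have t1: "((\<lambda>n. ereal (h (M n * c) / g (M n * c))) \<longlongrightarrow> a) sequentially"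
    using filterlim_compose[OF al MC] by simp
  have t2: "((\<lambda>n. g (M n * c) / g (M n)) \<longlongrightarrow> c powr \<rho>) sequentially"
    using filterlim_compose[OF rv Mlim] by simp
  have t2': "((\<lambda>n. ereal (g (M n * c) / g (M n))) \<longlongrightarrow> ereal (c powr \<rho>)) sequentially"
    using t2 by (simp add: lim_ereal)
  have lim: "((\<lambda>n. ereal (h (M n * c) / g (M n * c)) * ereal (g (M n * c) / g (M n))) \<longlongrightarrow> a * ereal (c powr \<rho>)) sequentially"
    using c by (intro tendsto_mult_ereal[OF t1 t2']) auto
  have eq: "\<And>n. ereal (h (M n * c) / g (M n * c)) * ereal (g (M n * c) / g (M n)) = ereal (h (M n * c) / g (M n))"
  proof -
    fix n
    have "0 < g (M n * c)" "0 < g (M n)" using gpos Mpos c by auto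
    then show "ereal (h (M n * c) / g (M n * c)) * ereal (g (M n * c) / g (M n)) = ereal (h (M n * c) / g (M n))"
      by simp
  qed
  show ?thesis using lim unfolding eq .
qed

lemma edge_lb:
  fixes N z :: "nat \<Rightarrow> real" and h g :: "real \<Rightarrow> real" and a :: ereal
  assumes L: "\<And>d. 0 < d \<Longrightarrow> ((\<lambda>k. ereal (h (N k * d) / g (N k))) \<longlongrightarrow> a * ereal (d powr \<rho>)) sequentially"
    and z: "z \<longlonglongrightarrow> z0" and zpos: "\<forall>k. 0 \<le> z k" and Npos: "\<forall>k. 0 < N k"
    and gpos: "\<forall>k. 0 < g (N k)" and mono: "mono_on {0..} h" and hnn: "\<forall>x\<ge>0. 0 \<le> h x"
    and ann: "0 \<le> a" and rho: "0 < \<rho>" and c: "c < limterm a z0 \<rho>"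
  shows "eventually (\<lambda>k. c < ereal (h (N k * z k) / g (N k))) sequentially"
proof -
  have z0: "0 \<le> z0" using z zpos by (intro LIMSEQ_le_const) auto
  show ?thesis
  proof (cases "z0 = 0")
    case True
    then have "c < 0" using c by (simp add: limterm_def)
    moreover have "\<And>k. 0 \<le> h (N k * z k) / g (N k)"
      using hnn Npos zpos gpos by (simp add: less_imp_le)
    ultimately show ?thesis by (intro always_eventually allI) (meson ereal_less_eq(5) order_less_le_trans)
  next
    case False
    then have z0p: "0 < z0" using z0 by simp
    have lt: "limterm a z0 \<rho> = a * ereal (z0 powr \<rho>)" using False by (simp add: limterm_def)
    obtain d where d: "0 < d" "d < z0" "c < a * ereal (d powr \<rho>)"
    proof (cases a)
      case PInf
      then have "a * ereal ((z0/2) powr \<rho>) = \<infinity>" using z0p by simp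
      moreover have "c < \<infinity>" using c by auto
      ultimately show ?thesis using that[of "z0/2"] z0p by auto
    next
      case MInf then show ?thesis using ann by simp
    next
      case (real r)
      show ?thesis
      proof (cases c)
        case MInf
        then show ?thesis using that[of "z0/2"] z0p real by simp
      next
        case PInf then show ?thesis using c by simp
      next
        case (real c')
        have "c' < r * z0 powr \<rho>" using c lt \<open>c = ereal c'\<close> \<open>a = ereal r\<close> by simp
        moreover have "((\<lambda>d. r * d powr \<rho>) \<longlongrightarrow> r * z0 powr \<rho>) (at_left z0)"
          using z0p by (intro tendsto_intros) auto
        ultimately have "eventually (\<lambda>d. c' < r * d powr \<rho>) (at_left z0)"
          by (simp add: order_tendstoD(1))
        then obtain b where b: "b < z0" "\<And>y. b < y \<Longrightarrow> y < z0 \<Longrightarrow> c' < r * y powr \<rho>"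
          unfolding eventually_at_left_field by blast
        define d where "d = (max b (z0/2) + z0) / 2"
        have "0 < d" "d < z0" "b < d" using b z0p by (auto simp: d_def)
        then show ?thesis using that[of d] b(2)[of d] \<open>c = ereal c'\<close> \<open>a = ereal r\<close> by simp
      qed
    qed
    have e1: "eventually (\<lambda>k. d < z k) sequentially" using z d by (simp add: order_tendstoD(1))
    have e2: "eventually (\<lambda>k. c < ereal (h (N k * d) / g (N k))) sequentially"
      using L[OF d(1)] d(3) by (simp add: order_tendstoD(1))
    show ?thesis using e1 e2
    proof eventually_elim
      case (elim k)
      have "h (N k * d) \<le> h (N k * z k)"
        using Npos d(1) elim(1) by (intro mono_onD[OF mono]) (auto simp: less_imp_le)
      then have "h (N k * d) / g (N k) \<le> h (N k * z k) / g (N k)"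
        using gpos by (simp add: divide_right_mono less_imp_le)
      then show ?case using elim(2) by (meson ereal_less_eq(3) order_less_le_trans)
    qed
  qed
qed

lemma edge_ub:
  fixes N z :: "nat \<Rightarrow> real" and h g :: "real \<Rightarrow> real" and r :: real
  assumes L: "\<And>d. 0 < d \<Longrightarrow> ((\<lambda>k. h (N k * d) / g (N k)) \<longlongrightarrow> r * d powr \<rho>) sequentially"
    and z: "z \<longlonglongrightarrow> z0" and zpos: "\<forall>k. 0 \<le> z k" and Npos: "\<forall>k. 0 < N k"
    and gpos: "\<forall>k. 0 < g (N k)" and mono: "mono_on {0..} h"
    and rnn: "0 \<le> r" and rho: "0 < \<rho>" and c: "r * z0 powr \<rho> < c"
  shows "eventually (\<lambda>k. h (N k * z k) / g (N k) < c) sequentially"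
proof -
  have z0: "0 \<le> z0" using z zpos by (intro LIMSEQ_le_const) auto
  have "((\<lambda>d. r * d powr \<rho>) \<longlongrightarrow> r * z0 powr \<rho>) (at_right z0)"
    using rho by (intro tendsto_intros tendsto_powr') (auto simp: eventually_at_right_field intro!: exI[of _ "z0+1"] order_trans[OF z0])
  then have "eventually (\<lambda>d. r * d powr \<rho> < c) (at_right z0)"
    using c by (simp add: order_tendstoD(2))
  then obtain b where b: "z0 < b" "\<And>y. z0 < y \<Longrightarrow> y < b \<Longrightarrow> r * y powr \<rho> < c"
    unfolding eventually_at_right_field by blast
  define d where "d = (z0 + b) / 2"
  have d: "z0 < d" "d < b" "0 < d" using b z0 by (auto simp: d_def)
  have e1: "eventually (\<lambda>k. z k < d) sequentially" using z d by (simp add: order_tendstoD(2))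
  have e2: "eventually (\<lambda>k. h (N k * d) / g (N k) < c) sequentially"
    using L[OF d(3)] b(2)[OF d(1,2)] by (simp add: order_tendstoD(2))
  show ?thesis using e1 e2
  proof eventually_elim
    case (elim k)
    have "h (N k * z k) \<le> h (N k * d)"
      using Npos d zpos elim(1) by (intro mono_onD[OF mono]) (auto simp: less_imp_le)
    then have "h (N k * z k) / g (N k) \<le> h (N k * d) / g (N k)"
      using gpos by (simp add: divide_right_mono less_imp_le)
    then show ?case using elim(2) by simp
  qed
qed


theorem lemmaB3:
  fixes \<omega> :: ereal
    and tail head :: "'e::finite \<Rightarrow> 'v"
    and orig dest :: "'i::finite \<Rightarrow> 'v"
    and P :: "'i \<Rightarrow> 'e list set"
    and ge :: "'e \<Rightarrow> real \<Rightarrow> real"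
    and g :: "real \<Rightarrow> real"
    and \<rho> :: real
    and \<alpha> :: "'e \<Rightarrow> ereal"
    and M :: "nat \<Rightarrow> real"
    and lam :: "nat \<Rightarrow> 'i \<Rightarrow> real"
    and lam0 :: "'i \<Rightarrow> real"
    and ybar :: "nat \<Rightarrow> 'i \<Rightarrow> 'e list \<Rightarrow> real"
  assumes omega: "\<omega> = 0 \<or> \<omega> = \<infinity>"
    and P_fin: "\<forall>i. finite (P i)"
    and P_ne: "\<forall>i. P i \<noteq> {}"
    and P_disj: "\<forall>i j. i \<noteq> j \<longrightarrow> P i \<inter> P j = {}"
    and P_paths: "\<forall>i. \<forall>p\<in>P i. is_path tail head (orig i) (dest i) p"
    and ge_mono: "\<forall>e. mono_on {0..} (ge e)"
    and ge_nonneg: "\<forall>e. \<forall>x\<ge>0. 0 \<le> ge e x"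
    and ge_zero: "\<forall>e. ge e 0 = 0"
    and g_pos: "\<forall>x>0. 0 < g x"
    and rho_pos: "0 < \<rho>"
    and g_regvar: "\<forall>x>0. ((\<lambda>t. g (t * x) / g t) \<longlongrightarrow> x powr \<rho>) (omega_filter \<omega>)"
    and alpha_lim: "\<forall>e. ((\<lambda>x. ereal (ge e x / g x)) \<longlongrightarrow> \<alpha> e) (omega_filter \<omega>)"
    and M_pos: "\<forall>n. 0 < M n"
    and lam_simplex: "\<forall>n. lam n \<in> prob_simplex UNIV"
    and M_lim: "filterlim M (omega_filter \<omega>) sequentially"
    and lam_lim: "\<forall>i. ((\<lambda>n. lam n i) \<longlongrightarrow> lam0 i) sequentially"
    and lam0_simplex: "lam0 \<in> prob_simplex UNIV"
    and finite_path: "\<forall>i. \<exists>p\<in>P i. alpha_path \<alpha> p < \<infinity>"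
    and nondeg: "\<exists>i. 0 < alpha_od P \<alpha> i \<and> alpha_od P \<alpha> i < \<infinity> \<and> 0 < lam0 i"
    and ybar_opt: "\<forall>n. ybar n \<in> allocs P \<and>
                     cost P ge (\<lambda>i. M n * lam n i) (ybar n) = Gopt P ge (\<lambda>i. M n * lam n i)"
  shows "0 < Vrho P \<alpha> \<rho> lam0 \<and> Vrho P \<alpha> \<rho> lam0 < \<infinity>
    \<and> ((\<lambda>n. ereal (Gopt P ge (\<lambda>i. M n * lam n i) / g (M n))) \<longlongrightarrow> Vrho P \<alpha> \<rho> lam0) sequentially
    \<and> (\<forall>y r. strict_mono r \<and> (\<forall>i p. ((\<lambda>k. ybar (r k) i p) \<longlongrightarrow> y i p) sequentially)
          \<longrightarrow> y \<in> allocs P \<and> Vobj P \<alpha> \<rho> lam0 y = Vrho P \<alpha> \<rho> lam0)"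
proof -
  define V where "V = Vrho P \<alpha> \<rho> lam0"
  define Q where "Q n = Gopt P ge (\<lambda>i. M n * lam n i) / g (M n)" for n
  have finE: "finite (UNIV :: 'e set)" by simp
  have gM: "\<And>n. 0 < g (M n)" using g_pos M_pos by auto
  have lam_nn: "\<And>n i. 0 \<le> lam n i" using lam_simplex by (auto simp: prob_simplex_def)
  have lam0_nn: "\<And>i. 0 \<le> lam0 i" using lam0_simplex by (auto simp: prob_simplex_def)
  have L2e: "\<And>e d. 0 < d \<Longrightarrow> ((\<lambda>n. ereal (ge e (M n * d) / g (M n))) \<longlongrightarrow> \<alpha> e * ereal (d powr \<rho>)) sequentially"
    using L2[OF omega M_lim M_pos g_pos g_regvar[rule_format] alpha_lim[rule_format]] by blast
  have anneg: "\<And>e. 0 \<le> \<alpha> e"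
  proof -
    fix e
    have "((\<lambda>n. ereal (ge e (M n * 1) / g (M n))) \<longlongrightarrow> \<alpha> e * ereal (1 powr \<rho>)) sequentially"
      by (rule L2e) simp
    then have lim: "((\<lambda>n. ereal (ge e (M n * 1) / g (M n))) \<longlongrightarrow> \<alpha> e) sequentially" by simp
    have "\<And>n. 0 \<le> ge e (M n * 1) / g (M n)"
      using ge_nonneg M_pos gM by (simp add: less_imp_le)
    then show "0 \<le> \<alpha> e" by (intro tendsto_lowerbound[OF lim]) (auto intro!: always_eventually)
  qed
  have ynn: "\<And>y i p. y \<in> allocs P \<Longrightarrow> 0 \<le> y i p"
    by (auto simp: allocs_def prob_simplex_def) (metis order_refl)
  have ple1: "\<And>y i p. y \<in> allocs P \<Longrightarrow> y i p \<le> 1"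
  proof -
    fix y i p assume y: "y \<in> allocs P"
    show "y i p \<le> 1"
    proof (cases "p \<in> P i")
      case True
      have "y i p \<le> sum (y i) (P i)"
        using y True P_fin by (intro member_le_sum) (auto simp: allocs_def prob_simplex_def)
      then show ?thesis using y by (auto simp: allocs_def prob_simplex_def)
    next
      case False then show ?thesis using y by (auto simp: allocs_def prob_simplex_def)
    qed
  qed
  have cost_eq: "\<And>n y. cost P ge (\<lambda>i. M n * lam n i) y / g (M n)
      = (\<Sum>e\<in>UNIV. ge e (M n * zeta P y (lam n) e) / g (M n))"
    by (simp add: cost_def xflow_eq sum_divide_distrib)
  have Q_eq: "\<And>n. Q n = (\<Sum>e\<in>UNIV. ge e (M n * zeta P (ybar n) (lam n) e) / g (M n))"
  proof -
    fix n
    have "Q n = cost P ge (\<lambda>i. M n * lam n i) (ybar n) / g (M n)" using ybar_opt by (simp add: Q_def)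
    then show "Q n = (\<Sum>e\<in>UNIV. ge e (M n * zeta P (ybar n) (lam n) e) / g (M n))" using cost_eq by simp
  qed
  have cost_nn: "\<And>n y. y \<in> allocs P \<Longrightarrow> 0 \<le> cost P ge (\<lambda>i. M n * lam n i) y"
  proof -
    fix n y assume y: "y \<in> allocs P"
    have "\<And>e. 0 \<le> M n * zeta P y (lam n) e"
      using zeta_nonneg[OF y] lam_nn M_pos by (simp add: less_imp_le)
    then show "0 \<le> cost P ge (\<lambda>i. M n * lam n i) y"
      unfolding cost_def using ge_nonneg by (auto intro!: sum_nonneg simp: xflow_eq)
  qed
  have Gopt_le: "\<And>n y. y \<in> allocs P \<Longrightarrow> Gopt P ge (\<lambda>i. M n * lam n i) \<le> cost P ge (\<lambda>i. M n * lam n i) y"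
    unfolding Gopt_def using cost_nn by (intro cINF_lower) (auto intro!: bdd_belowI)
  have nonempty: "\<And>i p. p \<in> P i \<Longrightarrow> p \<noteq> []"
    using P_paths by (auto simp: is_path_def)
  have alpha_le: "\<And>p e. e \<in> set p \<Longrightarrow> \<alpha> e \<le> alpha_path \<alpha> p"
    by (simp add: alpha_path_def)
  define pf where "pf i = (SOME p. p \<in> P i \<and> alpha_path \<alpha> p < \<infinity>)" for i
  have pf: "\<And>i. pf i \<in> P i \<and> alpha_path \<alpha> (pf i) < \<infinity>"
    unfolding pf_def using finite_path by (metis (mono_tags, lifting) someI_ex)
  define yf where "yf i p = (if p = pf i then 1 else (0::real))" for i p
  have yf_alloc: "yf \<in> allocs P"
    unfolding allocs_def prob_simplex_def yf_def using pf P_fin by auto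
  have zflow_yf: "\<And>e i. e \<notin> set (pf i) \<Longrightarrow> zflow P yf e i = 0"
    unfolding zflow_def yf_def by (intro sum.neutral) auto
  have zeta0: "\<And>y lam e. (\<forall>i. zflow P y e i = 0) \<Longrightarrow> zeta P y lam e = 0"
    unfolding zeta_def by simp
  have lt_nn: "\<And>e z. 0 \<le> limterm (\<alpha> e) z \<rho>"
    unfolding limterm_def using anneg by simp
  have Vfin: "V < \<infinity>"
  proof -
    have "\<forall>e. limterm (\<alpha> e) (zeta P yf lam0 e) \<rho> \<noteq> \<infinity>"
    proof
      fix e
      show "limterm (\<alpha> e) (zeta P yf lam0 e) \<rho> \<noteq> \<infinity>"
      proof (cases "zeta P yf lam0 e = 0")
        case True then show ?thesis by (simp add: limterm_def)
      next
        case False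
        then obtain i where "zflow P yf e i \<noteq> 0" using zeta0 by blast
        then have "e \<in> set (pf i)" using zflow_yf by blast
        then have "\<alpha> e \<le> alpha_path \<alpha> (pf i)" by (rule alpha_le)
        then have "\<alpha> e < \<infinity>" using pf[of i] by auto
        then obtain a where "\<alpha> e = ereal a" using anneg[of e] by (cases "\<alpha> e") auto
        then show ?thesis using False by (simp add: limterm_def)
      qed
    qed
    then have "Vobj P \<alpha> \<rho> lam0 yf \<noteq> \<infinity>" unfolding Vobj_def by (simp add: sum_Pinfty)
    then have "Vobj P \<alpha> \<rho> lam0 yf < \<infinity>" by (cases "Vobj P \<alpha> \<rho> lam0 yf") auto
    moreover have "V \<le> Vobj P \<alpha> \<rho> lam0 yf" unfolding V_def Vrho_def using yf_alloc by (rule INF_lower)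
    ultimately show ?thesis by (meson order_le_less_trans)
  qed
  have Vpos: "0 < V"
  proof -
    obtain i0 where i0: "0 < alpha_od P \<alpha> i0" "alpha_od P \<alpha> i0 < \<infinity>" "0 < lam0 i0"
      using nondeg by blast
    define k where "k = real (card (P i0))"
    have kpos: "0 < k" using P_fin P_ne by (simp add: k_def card_gt_0_iff)
    define w where "w = lam0 i0 / k"
    have wpos: "0 < w" using i0 kpos by (simp add: w_def)
    obtain a0 where a0: "alpha_od P \<alpha> i0 = ereal a0" "0 < a0"
      using i0 by (cases "alpha_od P \<alpha> i0") auto
    have lb: "ereal (a0 * w powr \<rho>) \<le> Vobj P \<alpha> \<rho> lam0 y" if y: "y \<in> allocs P" for y
    proof -
      obtain p where p: "p \<in> P i0" "1/k \<le> y i0 p"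
      proof (rule ccontr)
        assume "\<not> thesis"
        then have "\<forall>p\<in>P i0. y i0 p < 1/k" using that by (meson not_le)
        then have "sum (y i0) (P i0) < (\<Sum>p\<in>P i0. 1/k)"
          using P_fin P_ne by (intro sum_strict_mono) auto
        also have "\<dots> = 1" using kpos by (simp add: k_def)
        finally show False using y by (simp add: allocs_def prob_simplex_def)
      qed
      have "p \<noteq> []" using nonempty p(1) by blast
      then have "alpha_path \<alpha> p \<in> \<alpha> ` set p" unfolding alpha_path_def by (intro Max_in) auto
      then obtain e where e: "e \<in> set p" "\<alpha> e = alpha_path \<alpha> p" by auto
      have "alpha_od P \<alpha> i0 \<le> alpha_path \<alpha> p"
        unfolding alpha_od_def using p P_fin by (intro Min_le) auto
      then have ae: "ereal a0 \<le> \<alpha> e" using e a0 by simp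
      have fin1: "finite {q \<in> P i0. e \<in> set q}" using P_fin by simp
      have zf: "y i0 p \<le> zflow P y e i0" unfolding zflow_def
        using p e ynn[OF y] by (intro member_le_sum[OF _ _ fin1]) auto
      have "lam0 i0 * zflow P y e i0 \<le> zeta P y lam0 e" unfolding zeta_def
        using lam0_nn zflow_nonneg[OF y] by (intro member_le_sum) auto
      moreover have "w \<le> lam0 i0 * zflow P y e i0"
      proof -
        have "w = lam0 i0 * (1/k)" by (simp add: w_def)
        also have "\<dots> \<le> lam0 i0 * zflow P y e i0"
          using p zf lam0_nn by (intro mult_left_mono) auto
        finally show ?thesis .
      qed
      ultimately have wz: "w \<le> zeta P y lam0 e" by simp
      then have zne: "zeta P y lam0 e \<noteq> 0" using wpos by auto
      have "ereal (a0 * w powr \<rho>) = ereal a0 * ereal (w powr \<rho>)" by simp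
      also have "\<dots> \<le> ereal a0 * ereal (zeta P y lam0 e powr \<rho>)"
        using wz wpos rho_pos a0 by (intro ereal_mult_left_mono) (auto intro!: powr_mono2)
      also have "\<dots> \<le> \<alpha> e * ereal (zeta P y lam0 e powr \<rho>)"
        using ae by (intro ereal_mult_right_mono) auto
      also have "\<dots> = limterm (\<alpha> e) (zeta P y lam0 e) \<rho>" using zne by (simp add: limterm_def)
      also have "\<dots> \<le> Vobj P \<alpha> \<rho> lam0 y" unfolding Vobj_def
        using lt_nn by (intro ereal_member_le_sum) auto
      finally show ?thesis .
    qed
    then have "ereal (a0 * w powr \<rho>) \<le> V" unfolding V_def Vrho_def by (auto intro!: INF_greatest)
    moreover have "0 < a0 * w powr \<rho>" using a0 wpos by simp
    ultimately show ?thesis by (meson ereal_less(2) order_less_le_trans)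
  qed
  have UB: "eventually (\<lambda>n. ereal (Q n) < B) sequentially"
    if y: "y \<in> allocs P" and yB: "Vobj P \<alpha> \<rho> lam0 y < B" for y B
  proof (cases B)
    case PInf then show ?thesis by simp
  next
    case MInf then show ?thesis using yB by simp
  next
    case (real b)
    define y' where "y' i = (if lam0 i = 0 then yf i else y i)" for i
    have y'_alloc: "y' \<in> allocs P" using y yf_alloc by (auto simp: allocs_def y'_def)
    have zeq: "\<And>e. zeta P y' lam0 e = zeta P y lam0 e"
      unfolding zeta_def y'_def zflow_def by (intro sum.cong) auto
    have Veq: "Vobj P \<alpha> \<rho> lam0 y' = Vobj P \<alpha> \<rho> lam0 y" unfolding Vobj_def using zeq by simp
    have Vyfin: "Vobj P \<alpha> \<rho> lam0 y \<noteq> \<infinity>" using yB by auto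
    have ltfin: "\<And>e. limterm (\<alpha> e) (zeta P y lam0 e) \<rho> \<noteq> \<infinity>"
      using Vyfin unfolding Vobj_def by (auto simp: sum_Pinfty)
    have inf0: "\<And>e l. \<alpha> e = \<infinity> \<Longrightarrow> zeta P y' l e = 0"
    proof -
      fix e l assume ae: "\<alpha> e = \<infinity>"
      have z0: "zeta P y lam0 e = 0"
      proof (rule ccontr)
        assume "zeta P y lam0 e \<noteq> 0"
        then have "limterm (\<alpha> e) (zeta P y lam0 e) \<rho> = \<infinity>" using ae by (simp add: limterm_def)
        then show False using ltfin by blast
      qed
      have "\<forall>i. zflow P y' e i = 0"
      proof
        fix i
        show "zflow P y' e i = 0"
        proof (cases "lam0 i = 0")
          case True
          have "e \<notin> set (pf i)"
          proof
            assume "e \<in> set (pf i)"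
            then have "\<alpha> e \<le> alpha_path \<alpha> (pf i)" by (rule alpha_le)
            then show False using pf[of i] ae by auto
          qed
          moreover have "zflow P y' e i = zflow P yf e i" by (simp add: zflow_def y'_def True)
          ultimately show ?thesis using zflow_yf by simp
        next
          case False
          have "lam0 i * zflow P y e i = 0"
            using z0 sum_nonneg_eq_0_iff[of UNIV "\<lambda>i. lam0 i * zflow P y e i"] lam0_nn zflow_nonneg[OF y]
            unfolding zeta_def by auto
          then have "zflow P y e i = 0" using False by simp
          then show ?thesis using False by (simp add: zflow_def y'_def)
        qed
      qed
      then show "zeta P y' l e = 0" by (rule zeta0)
    qed
    define r where "r e = real_of_ereal (limterm (\<alpha> e) (zeta P y' lam0 e) \<rho>)" for e
    have lt_r: "\<And>e. limterm (\<alpha> e) (zeta P y' lam0 e) \<rho> = ereal (r e)"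
    proof -
      fix e
      have "limterm (\<alpha> e) (zeta P y' lam0 e) \<rho> \<noteq> \<infinity>" "0 \<le> limterm (\<alpha> e) (zeta P y' lam0 e) \<rho>"
        using ltfin[of e] zeq[of e] lt_nn[of e] by auto
      then show "limterm (\<alpha> e) (zeta P y' lam0 e) \<rho> = ereal (r e)" unfolding r_def
        by (cases "limterm (\<alpha> e) (zeta P y' lam0 e) \<rho>") auto
    qed
    have "Vobj P \<alpha> \<rho> lam0 y' = ereal (\<Sum>e\<in>UNIV. r e)" unfolding Vobj_def lt_r by simp
    then have sum_r: "(\<Sum>e\<in>UNIV. r e) < b" using yB Veq real by simp
    have ev: "eventually (\<lambda>n. (\<Sum>e\<in>UNIV. ge e (M n * zeta P y' (lam n) e) / g (M n)) < b) sequentially"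
    proof (rule ev_sum_lt[OF finE _ sum_r])
      fix e c assume "e \<in> UNIV" "r e < c"
      show "eventually (\<lambda>n. ge e (M n * zeta P y' (lam n) e) / g (M n) < c) sequentially"
      proof (cases "\<alpha> e = \<infinity>")
        case True
        then have "r e = 0" unfolding r_def using inf0 by (simp add: limterm_def)
        then show ?thesis using \<open>r e < c\<close> inf0[OF True] ge_zero by (intro always_eventually) simp
      next
        case False
        then obtain a where a: "\<alpha> e = ereal a" using anneg[of e] by (cases "\<alpha> e") auto
        have ann: "0 \<le> a" using anneg[of e] a by simp
        have re: "r e = a * zeta P y' lam0 e powr \<rho>" unfolding r_def limterm_def a by simp
        have Lr: "((\<lambda>k. ge e (M k * d) / g (M k)) \<longlongrightarrow> a * d powr \<rho>) sequentially" if "0 < d" for d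
          using L2e[OF that, of e] a by (simp add: lim_ereal)
        have zc: "(\<lambda>k. zeta P y' (lam k) e) \<longlonglongrightarrow> zeta P y' lam0 e"
          using lam_lim by (intro zeta_conv) auto
        have zp: "\<forall>k. 0 \<le> zeta P y' (lam k) e" using zeta_nonneg[OF y'_alloc] lam_nn by auto
        show ?thesis
          using edge_ub[OF Lr zc zp M_pos _ _ ann rho_pos, of c] gM ge_mono \<open>r e < c\<close> re by auto
      qed
    qed
    then show ?thesis
    proof (rule eventually_mono)
      fix n assume H: "(\<Sum>e\<in>UNIV. ge e (M n * zeta P y' (lam n) e) / g (M n)) < b"
      have "Q n \<le> cost P ge (\<lambda>i. M n * lam n i) y' / g (M n)"
        unfolding Q_def using Gopt_le[OF y'_alloc] gM by (intro divide_right_mono) (auto simp: less_imp_le)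
      then show "ereal (Q n) < B" using H cost_eq real by simp
    qed
  qed
  have LBsub: "y \<in> allocs P \<and> (\<forall>B. B < Vobj P \<alpha> \<rho> lam0 y \<longrightarrow> eventually (\<lambda>k. B < ereal (Q (\<phi> k))) sequentially)"
    if phi: "strict_mono \<phi>" and conv: "\<forall>i p. (\<lambda>k. ybar (\<phi> k) i p) \<longlonglongrightarrow> y i p" for \<phi> y
  proof
    show ya: "y \<in> allocs P" using allocs_limit[OF P_fin _ conv] ybar_opt by auto
    show "\<forall>B. B < Vobj P \<alpha> \<rho> lam0 y \<longrightarrow> eventually (\<lambda>k. B < ereal (Q (\<phi> k))) sequentially"
    proof (intro allI impI)
      fix B assume B: "B < Vobj P \<alpha> \<rho> lam0 y"
      have zb_nn: "\<And>n e. 0 \<le> zeta P (ybar n) (lam n) e"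
        using ybar_opt lam_nn by (intro zeta_nonneg) auto
      define z where "z e k = zeta P (ybar (\<phi> k)) (lam (\<phi> k)) e" for e k
      define t where "t e k = ge e (M (\<phi> k) * z e k) / g (M (\<phi> k))" for e k
      have Qt: "\<And>k. Q (\<phi> k) = (\<Sum>e\<in>UNIV. t e k)" using Q_eq by (simp add: t_def z_def)
      have lamc: "\<forall>i. (\<lambda>k. lam (\<phi> k) i) \<longlonglongrightarrow> lam0 i"
      proof
        fix i
        have "((\<lambda>n. lam n i) \<circ> \<phi>) \<longlonglongrightarrow> lam0 i" by (rule LIMSEQ_subseq_LIMSEQ[OF lam_lim[rule_format] phi])
        then show "(\<lambda>k. lam (\<phi> k) i) \<longlonglongrightarrow> lam0 i" by (simp add: o_def)
      qed
      have zc: "\<And>e. z e \<longlonglongrightarrow> zeta P y lam0 e"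
        unfolding z_def using zeta_conv[of "\<lambda>k. ybar (\<phi> k)" y "\<lambda>k. lam (\<phi> k)" lam0 P] conv lamc by blast
      have per: "eventually (\<lambda>k. c < ereal (t e k)) sequentially"
        if c: "c < limterm (\<alpha> e) (zeta P y lam0 e) \<rho>" for e c
      proof -
        have L: "((\<lambda>k. ereal (ge e ((M \<circ> \<phi>) k * d) / g ((M \<circ> \<phi>) k))) \<longlongrightarrow> \<alpha> e * ereal (d powr \<rho>)) sequentially"
          if "0 < d" for d
          using LIMSEQ_subseq_LIMSEQ[OF L2e[OF that, of e] phi] by (simp add: o_def)
        have zp: "\<forall>k. 0 \<le> z e k" using zb_nn unfolding z_def by auto
        have Np: "\<forall>k. 0 < (M \<circ> \<phi>) k" using M_pos by simp
        have gp: "\<forall>k. 0 < g ((M \<circ> \<phi>) k)" using gM by simp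
        show ?thesis
          using edge_lb[OF L zc[of e] zp Np gp ge_mono[rule_format] _ anneg rho_pos c] ge_nonneg
          by (simp add: t_def o_def)
      qed
      have tnn: "\<And>e k. 0 \<le> t e k"
      proof -
        fix e k
        have "0 \<le> z e k" using zb_nn unfolding z_def by auto
        then show "0 \<le> t e k" unfolding t_def using ge_nonneg M_pos gM
          by (simp add: less_imp_le)
      qed
      show "eventually (\<lambda>k. B < ereal (Q (\<phi> k))) sequentially"
      proof (cases B)
        case PInf then show ?thesis using B by simp
      next
        case MInf then show ?thesis by simp
      next
        case (real b)
        show ?thesis
        proof (cases "\<exists>e. limterm (\<alpha> e) (zeta P y lam0 e) \<rho> = \<infinity>")
          case True
          then obtain e where e: "limterm (\<alpha> e) (zeta P y lam0 e) \<rho> = \<infinity>" by blast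
          have "eventually (\<lambda>k. ereal b < ereal (t e k)) sequentially" using per[of b e] e by simp
          then show ?thesis
          proof (rule eventually_mono)
            fix k assume "ereal b < ereal (t e k)"
            moreover have "t e k \<le> (\<Sum>e\<in>UNIV. t e k)" using tnn by (intro member_le_sum) auto
            ultimately show "B < ereal (Q (\<phi> k))" using real Qt by simp
          qed
        next
          case False
          define l where "l e = real_of_ereal (limterm (\<alpha> e) (zeta P y lam0 e) \<rho>)" for e
          have ll: "\<And>e. limterm (\<alpha> e) (zeta P y lam0 e) \<rho> = ereal (l e)"
          proof -
            fix e
            have "limterm (\<alpha> e) (zeta P y lam0 e) \<rho> \<noteq> \<infinity>" "0 \<le> limterm (\<alpha> e) (zeta P y lam0 e) \<rho>"
              using False lt_nn[of e] by auto
            then show "limterm (\<alpha> e) (zeta P y lam0 e) \<rho> = ereal (l e)" unfolding l_def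
              by (cases "limterm (\<alpha> e) (zeta P y lam0 e) \<rho>") auto
          qed
          have "Vobj P \<alpha> \<rho> lam0 y = ereal (\<Sum>e\<in>UNIV. l e)" unfolding Vobj_def ll by simp
          then have bl: "b < (\<Sum>e\<in>UNIV. l e)" using B real by simp
          have "eventually (\<lambda>k. b < (\<Sum>e\<in>UNIV. t e k)) sequentially"
          proof (rule ev_sum_gt[OF finE _ bl])
            fix e c assume "e \<in> UNIV" "c < l e"
            then have "ereal c < limterm (\<alpha> e) (zeta P y lam0 e) \<rho>" using ll by simp
            from per[OF this] show "eventually (\<lambda>k. c < t e k) sequentially" by simp
          qed
          then show ?thesis using Qt real by simp
        qed
      qed
    qed
  qed
  have LB: "eventually (\<lambda>n. B < ereal (Q n)) sequentially" if B: "B < V" for B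
  proof (rule ccontr)
    assume ne: "\<not> eventually (\<lambda>n. B < ereal (Q n)) sequentially"
    obtain r :: "nat \<Rightarrow> nat" where r: "strict_mono r" "\<And>n. \<not> B < ereal (Q (r n))"
      using not_eventually_sequentiallyD[OF ne] by metis
    define u where "u n x = ybar (r n) (fst x) (snd x)" for n x
    have ubnd: "\<forall>n x. \<bar>u n x\<bar> \<le> 1"
      using ynn ple1 ybar_opt unfolding u_def by (metis abs_of_nonneg)
    have finS: "finite (Sigma UNIV P)" using P_fin by (intro finite_SigmaI) auto
    obtain \<psi> l where psi: "strict_mono \<psi>" and cl: "\<forall>x\<in>Sigma UNIV P. (\<lambda>k. u (\<psi> k) x) \<longlonglongrightarrow> l x"
      using extract_conv[OF finS ubnd] by blast
    define y where "y i p = (if p \<in> P i then l (i,p) else 0)" for i p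
    have conv: "\<forall>i p. (\<lambda>k. ybar ((r \<circ> \<psi>) k) i p) \<longlonglongrightarrow> y i p"
    proof (intro allI)
      fix i p
      show "(\<lambda>k. ybar ((r \<circ> \<psi>) k) i p) \<longlonglongrightarrow> y i p"
      proof (cases "p \<in> P i")
        case True
        then show ?thesis using cl[rule_format, of "(i,p)"] by (simp add: u_def y_def)
      next
        case False
        then have "\<And>n. ybar n i p = 0" using ybar_opt by (auto simp: allocs_def prob_simplex_def)
        then show ?thesis using False by (simp add: y_def)
      qed
    qed
    from LBsub[OF strict_mono_o[OF r(1) psi] conv]
    have ya: "y \<in> allocs P"
      and ev: "\<forall>B. B < Vobj P \<alpha> \<rho> lam0 y \<longrightarrow> eventually (\<lambda>k. B < ereal (Q ((r \<circ> \<psi>) k))) sequentially"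
      by auto
    have "V \<le> Vobj P \<alpha> \<rho> lam0 y" unfolding V_def Vrho_def using ya by (rule INF_lower)
    then have "B < Vobj P \<alpha> \<rho> lam0 y" using B by simp
    then have "eventually (\<lambda>k. B < ereal (Q ((r \<circ> \<psi>) k))) sequentially" using ev by blast
    then obtain k where "B < ereal (Q ((r \<circ> \<psi>) k))" using eventually_sequentially by auto
    then show False using r(2)[of "\<psi> k"] by simp
  qed
  have lim: "((\<lambda>n. ereal (Q n)) \<longlongrightarrow> V) sequentially"
  proof (rule order_tendstoI)
    fix a assume "a < V" then show "eventually (\<lambda>n. a < ereal (Q n)) sequentially" by (rule LB)
  next
    fix a assume "V < a"
    then obtain y where "y \<in> allocs P" "Vobj P \<alpha> \<rho> lam0 y < a"
      unfolding V_def Vrho_def by (auto simp: INF_less_iff)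
    then show "eventually (\<lambda>n. ereal (Q n) < a) sequentially" by (rule UB)
  qed
  have final: "\<forall>y r. strict_mono r \<and> (\<forall>i p. ((\<lambda>k. ybar (r k) i p) \<longlongrightarrow> y i p) sequentially)
          \<longrightarrow> y \<in> allocs P \<and> Vobj P \<alpha> \<rho> lam0 y = V"
  proof (intro allI impI)
    fix y r assume H: "strict_mono r \<and> (\<forall>i p. ((\<lambda>k. ybar (r k) i p) \<longlongrightarrow> y i p) sequentially)"
    from LBsub[of r y] H
    have ya: "y \<in> allocs P"
      and ev: "\<forall>B. B < Vobj P \<alpha> \<rho> lam0 y \<longrightarrow> eventually (\<lambda>k. B < ereal (Q (r k))) sequentially"
      by auto
    have le1: "V \<le> Vobj P \<alpha> \<rho> lam0 y" unfolding V_def Vrho_def using ya by (rule INF_lower)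
    have "\<not> V < Vobj P \<alpha> \<rho> lam0 y"
    proof
      assume "V < Vobj P \<alpha> \<rho> lam0 y"
      then obtain Bb where Bb: "V < Bb" "Bb < Vobj P \<alpha> \<rho> lam0 y" using dense by blast
      have e1: "eventually (\<lambda>k. Bb < ereal (Q (r k))) sequentially" using ev Bb(2) by blast
      have "((\<lambda>n. ereal (Q n)) \<circ> r) \<longlonglongrightarrow> V" using LIMSEQ_subseq_LIMSEQ[OF lim] H by blast
      then have e2: "eventually (\<lambda>k. ereal (Q (r k)) < Bb) sequentially"
        using Bb(1) order_tendstoD(2) by (fastforce simp: o_def)
      have "eventually (\<lambda>k. False) sequentially"
        using eventually_conj[OF e1 e2] by (rule eventually_mono) auto
      then show False by simp
    qed
    then show "y \<in> allocs P \<and> Vobj P \<alpha> \<rho> lam0 y = V" using le1 ya by auto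
  qed
  show ?thesis using Vpos Vfin lim final unfolding V_def Q_def by auto
qed

end
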